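(* Let $k\geq 2$ and $n>5k^{2}$ be integers. Then \[ n+2k-2-\frac{2(k^{2}-k)}{n+2k+2}>q\left(S_{n,k}^{+}\right)>q\left(S_{n,k}\right)>n+2k-2-\frac{2(k^{2}-k)}{n+2k-3}. \]
   Context: All graphs are finite and simple. For a graph $G$, the signless Laplacian is $Q(G)=D(G)+A(G)$, where $D(G)$ is the diagonal matrix of vertex degrees and $A(G)$ is the adjacency matrix; $q(G)$ denotes the largest eigenvalue of $Q(G)$. $S_{n,k}=K_{k}\vee\overline{K}_{n-k}$ is the graph of order $n$ obtained by joining every vertex of a complete graph on $k$ vertices to every vertex of an independent set of $n-k$ vertices. $S_{n,k}^{+}$ is the graph obtained from $S_{n,k}$ by adding one edge (necessarily joining two vertices of the independent set of size $n-k$). *)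

theory Defs
  imports "Jordan_Normal_Form.Char_Poly"
begin

text \<open>A simple graph on the vertex set {0..<n} is given by a symmetric irreflexive
  adjacency relation E restricted to vertices below n.\<close>

definition degree :: "nat \<Rightarrow> (nat \<Rightarrow> nat \<Rightarrow> bool) \<Rightarrow> nat \<Rightarrow> nat" where
  "degree n E i = card {j. j < n \<and> E i j}"

definition signless_laplacian :: "nat \<Rightarrow> (nat \<Rightarrow> nat \<Rightarrow> bool) \<Rightarrow> real mat" where
  "signless_laplacian n E =
     mat n n (\<lambda>(i,j). (if i = j then real (degree n E i) else 0) + (if E i j then 1 else 0))"

definition q_index :: "nat \<Rightarrow> (nat \<Rightarrow> nat \<Rightarrow> bool) \<Rightarrow> real" where
  "q_index n E = Max {x. eigenvalue (signless_laplacian n E) x}"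

text \<open>S_{n,k} = K_k join complement of K_{n-k}: vertices 0..<k form the clique,
  vertices k..<n the independent set.\<close>
definition S_graph :: "nat \<Rightarrow> nat \<Rightarrow> nat \<Rightarrow> bool" where
  "S_graph k i j = (i \<noteq> j \<and> (i < k \<or> j < k))"

text \<open>S_{n,k}^+: add the edge between the independent-set vertices k and k+1.\<close>
definition S_plus_graph :: "nat \<Rightarrow> nat \<Rightarrow> nat \<Rightarrow> bool" where
  "S_plus_graph k i j = (S_graph k i j \<or> {i, j} = {k, Suc k})"

end

theory Submission
  imports Defs
begin

lemma mult_row_sum:
  fixes A :: "real mat"
  assumes "A \<in> carrier_mat n n" "v \<in> carrier_vec n" "i < n"
  shows "(A *\<^sub>v v) $ i = (\<Sum>j\<in>{0..<n}. A $$ (i,j) * v $ j)"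
  using assms by (auto simp: scalar_prod_def intro!: sum.cong)

lemma perron_bound:
  fixes A :: "real mat"
  assumes A: "A \<in> carrier_mat n n" and nn: "\<And>i j. i<n \<Longrightarrow> j<n \<Longrightarrow> A$$(i,j) \<ge> 0"
  and u: "u \<in> carrier_vec n" and upos: "\<And>i. i<n \<Longrightarrow> u$i > 0" and Au: "A *\<^sub>v u = \<rho> \<cdot>\<^sub>v u"
  and ev: "eigenvector A v lam"
  shows "lam \<le> \<rho>"
proof -
  from ev A have v: "v \<in> carrier_vec n" "v \<noteq> 0\<^sub>v n" "A *\<^sub>v v = lam \<cdot>\<^sub>v v"
    by (auto simp: eigenvector_def)
  obtain j where j: "j<n" "v$j \<noteq> 0" using v by (metis eq_vecI index_zero_vec(1) carrier_vecD index_zero_vec(2))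
  define t where "t = Max ((\<lambda>j. \<bar>v$j\<bar>/u$j) ` {0..<n})"
  have tj: "\<bar>v$j\<bar>/u$j \<le> t" if "j<n" for j unfolding t_def using that by (intro Max_ge) auto
  have "t \<in> (\<lambda>j. \<bar>v$j\<bar>/u$j) ` {0..<n}" unfolding t_def using j by (intro Max_in) auto
  then obtain i where i: "i<n" "t = \<bar>v$i\<bar>/u$i" by auto
  have tpos: "t > 0" using tj[OF j(1)] j upos[OF j(1)] by (smt (verit) divide_pos_pos zero_less_abs_iff)
  have vi: "\<bar>v$i\<bar> = t * u$i" using i upos[OF i(1)] by auto
  have vjb: "\<bar>v$j\<bar> \<le> t * u$j" if "j<n" for j using tj[OF that] upos[OF that] by (simp add: divide_le_eq mult.commute)
  have "\<bar>lam\<bar> * \<bar>v$i\<bar> = \<bar>(A *\<^sub>v v) $ i\<bar>" using v i by (simp add: abs_mult)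
  also have "\<dots> = \<bar>\<Sum>j\<in>{0..<n}. A $$ (i,j) * v $ j\<bar>" using mult_row_sum[OF A v(1) i(1)] by simp
  also have "\<dots> \<le> (\<Sum>j\<in>{0..<n}. \<bar>A $$ (i,j) * v $ j\<bar>)" by (rule sum_abs)
  also have "\<dots> \<le> (\<Sum>j\<in>{0..<n}. A $$ (i,j) * (t * u $ j))"
    using nn[OF i(1)] vjb by (intro sum_mono) (auto simp: abs_mult intro!: mult_left_mono)
  also have "\<dots> = t * (A *\<^sub>v u) $ i" using mult_row_sum[OF A u i(1)]
    by (simp add: sum_distrib_left algebra_simps)
  also have "\<dots> = t * (\<rho> * u $ i)" using Au i u by simp
  also have "\<dots> = \<rho> * \<bar>v$i\<bar>" using vi by simp
  finally have "\<bar>lam\<bar> * \<bar>v$i\<bar> \<le> \<rho> * \<bar>v$i\<bar>" .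
  moreover have "\<bar>v$i\<bar> > 0" using vi tpos upos[OF i(1)] by simp
  ultimately have "\<bar>lam\<bar> \<le> \<rho>" by simp
  thus ?thesis by simp
qed

lemma max_eig:
  fixes A :: "real mat"
  assumes A: "A \<in> carrier_mat n n" and nn: "\<And>i j. i<n \<Longrightarrow> j<n \<Longrightarrow> A$$(i,j) \<ge> 0"
  and u: "u \<in> carrier_vec n" and upos: "\<And>i. i<n \<Longrightarrow> u$i > 0" and Au: "A *\<^sub>v u = \<rho> \<cdot>\<^sub>v u"
  and n: "n > 0"
  shows "Max {x. eigenvalue A x} = \<rho>"
proof (rule Max_eqI)
  have "char_poly A \<noteq> 0" using degree_monic_char_poly[OF A] by auto
  hence "finite {x. poly (char_poly A) x = 0}" by (rule poly_roots_finite)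
  thus "finite {x. eigenvalue A x}" using eigenvalue_root_char_poly[OF A] by simp
  show "y \<le> \<rho>" if "y \<in> {x. eigenvalue A x}" for y
    using that perron_bound[OF A nn u upos Au] by (auto simp: eigenvalue_def)
  have "u \<noteq> 0\<^sub>v n" using upos[OF n] n by auto
  then show "\<rho> \<in> {x. eigenvalue A x}" using A u Au by (auto simp: eigenvalue_def eigenvector_def)
qed

lemma Q_carrier: "signless_laplacian n E \<in> carrier_mat n n"
  by (simp add: signless_laplacian_def)

lemma Q_nn: "i<n \<Longrightarrow> j<n \<Longrightarrow> signless_laplacian n E $$ (i,j) \<ge> 0"
  by (simp add: signless_laplacian_def)

lemma Q_row:
  assumes "i<n" "v \<in> carrier_vec n"
  shows "(signless_laplacian n E *\<^sub>v v) $ i = (\<Sum>j\<in>{0..<n}. if E i j then v$i + v$j else 0)"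
proof -
  have deg: "real (degree n E i) = (\<Sum>j\<in>{0..<n}. if E i j then 1 else 0)"
  proof -
    have "{j. j < n \<and> E i j} = {j\<in>{0..<n}. E i j}" by auto
    thus ?thesis unfolding degree_def
      by (simp add: sum.inter_filter[symmetric] of_nat_sum[symmetric])
  qed
  have "(signless_laplacian n E *\<^sub>v v) $ i = (\<Sum>j\<in>{0..<n}. signless_laplacian n E $$ (i,j) * v $ j)"
    by (rule mult_row_sum[OF Q_carrier assms(2) assms(1)])
  also have "\<dots> = (\<Sum>j\<in>{0..<n}. (if i = j then real (degree n E i) * v$j else 0) + (if E i j then v$j else 0))"
    using assms by (intro sum.cong) (auto simp: signless_laplacian_def algebra_simps)
  also have "\<dots> = real (degree n E i) * v$i + (\<Sum>j\<in>{0..<n}. if E i j then v$j else 0)"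
    using assms by (simp add: sum.distrib)
  also have "\<dots> = (\<Sum>j\<in>{0..<n}. (if E i j then v$j else 0) + v$i * (if E i j then 1 else 0))"
    unfolding deg by (simp add: sum.distrib sum_distrib_left algebra_simps)
  also have "\<dots> = (\<Sum>j\<in>{0..<n}. if E i j then v$i + v$j else 0)"
    by (intro sum.cong) auto
  finally show ?thesis .
qed

lemma sum_below:
  fixes k n :: nat
  assumes "k \<le> n"
  shows "(\<Sum>j\<in>{0..<n}. if j<k then f j else (0::real)) = (\<Sum>j\<in>{0..<k}. f j)"
proof -
  have "{j\<in>{0..<n}. j<k} = {0..<k}" using assms by auto
  thus ?thesis by (simp add: sum.inter_filter[symmetric])
qed

lemma sum_except:
  fixes i n :: nat
  assumes "i < n"
  shows "(\<Sum>j\<in>{0..<n}. if j \<noteq> i then f j else (0::real)) = (\<Sum>j\<in>{0..<n}. f j) - f i"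
proof -
  have "(\<Sum>j\<in>{0..<n}. f j) = (\<Sum>j\<in>{0..<n}. (if j \<noteq> i then f j else 0) + (if j = i then f j else 0))"
    by (intro sum.cong) auto
  also have "\<dots> = (\<Sum>j\<in>{0..<n}. if j \<noteq> i then f j else 0) + f i"
    using assms by (subst sum.distrib, subst sum.delta) auto
  finally show ?thesis by simp
qed

lemma S_eig:
  fixes k n :: nat and r b :: real
  assumes kn: "k < n" and hb: "real k = (r - k) * b" and hr: "r = real n + k - 2 + (real n - k) * b"
  shows "signless_laplacian n (S_graph k) *\<^sub>v vec n (\<lambda>j. if j<k then 1 else b)
         = r \<cdot>\<^sub>v vec n (\<lambda>j. if j<k then 1 else b)"
    (is "?Q *\<^sub>v ?u = _")
proof (rule eq_vecI)
  show "dim_vec (?Q *\<^sub>v ?u) = dim_vec (r \<cdot>\<^sub>v ?u)" by (simp add: signless_laplacian_def)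
  fix i assume "i < dim_vec (r \<cdot>\<^sub>v ?u)"
  hence i: "i < n" by simp
  have u: "?u \<in> carrier_vec n" by simp
  have "(?Q *\<^sub>v ?u) $ i = (\<Sum>j\<in>{0..<n}. if S_graph k i j then ?u$i + ?u$j else 0)"
    by (rule Q_row[OF i u])
  also have "\<dots> = r * ?u $ i"
  proof (cases "i < k")
    case True
    have "(\<Sum>j\<in>{0..<n}. if S_graph k i j then ?u$i + ?u$j else 0)
        = (\<Sum>j\<in>{0..<n}. if j \<noteq> i then 1 + (if j<k then 1 else b) else 0)"
      using True i by (intro sum.cong) (auto simp: S_graph_def)
    also have "\<dots> = (\<Sum>j\<in>{0..<n}. 1 + (if j<k then 1 else b)) - 2"
      using True i by (subst sum_except) auto
    also have "(\<Sum>j\<in>{0..<n}. 1 + (if j<k then 1 else b)) =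
       (\<Sum>j\<in>{0..<k}. 1 + (if j<k then 1 else b)) + (\<Sum>j\<in>{k..<n}. 1 + (if j<k then 1 else b))"
      using kn by (subst sum.atLeastLessThan_concat) auto
    also have "\<dots> = 2 * real k + (real n - k) * (1 + b)"
      using kn by (simp add: of_nat_diff)
    finally show ?thesis using True i hr by (simp add: algebra_simps)
  next
    case False
    have "(\<Sum>j\<in>{0..<n}. if S_graph k i j then ?u$i + ?u$j else 0)
        = (\<Sum>j\<in>{0..<n}. if j < k then b + 1 else 0)"
      using False i by (intro sum.cong) (auto simp: S_graph_def)
    also have "\<dots> = real k * (b + 1)" using kn by (subst sum_below) auto
    finally show ?thesis using False i hb by (simp add: algebra_simps)
  qed
  also have "\<dots> = (r \<cdot>\<^sub>v ?u) $ i" using i by simp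
  finally show "(?Q *\<^sub>v ?u) $ i = (r \<cdot>\<^sub>v ?u) $ i" .
qed

lemma Sp_eig:
  fixes k n :: nat and x b c :: real
  assumes kn: "k + 2 \<le> n" and hb: "real k = (x - k - 2) * b" and hc: "real k = (x - k) * c"
    and hx: "x = real n + k - 2 + 2 * b + (real n - k - 2) * c"
  shows "signless_laplacian n (S_plus_graph k) *\<^sub>v vec n (\<lambda>j. if j<k then 1 else if j < k+2 then b else c)
         = x \<cdot>\<^sub>v vec n (\<lambda>j. if j<k then 1 else if j < k+2 then b else c)"
    (is "?Q *\<^sub>v ?u = _")
proof (rule eq_vecI)
  show "dim_vec (?Q *\<^sub>v ?u) = dim_vec (x \<cdot>\<^sub>v ?u)" by (simp add: signless_laplacian_def)
  fix i assume "i < dim_vec (x \<cdot>\<^sub>v ?u)"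
  hence i: "i < n" by simp
  have u: "?u \<in> carrier_vec n" by simp
  define w where "w = (\<lambda>j::nat. if j<k then 1 else if j < k+2 then b else c)"
  have uw: "?u $ j = w j" if "j < n" for j using that by (simp add: w_def)
  have "(?Q *\<^sub>v ?u) $ i = (\<Sum>j\<in>{0..<n}. if S_plus_graph k i j then ?u$i + ?u$j else 0)"
    by (rule Q_row[OF i u])
  also have "\<dots> = (\<Sum>j\<in>{0..<n}. if S_plus_graph k i j then w i + w j else 0)"
    using i by (intro sum.cong) (auto simp: w_def)
  also have "\<dots> = x * w i"
  proof -
    consider "i < k" | "i = k" | "i = k+1" | "k+2 \<le> i" by linarith
    then show ?thesis
    proof cases
      case 1
      have "(\<Sum>j\<in>{0..<n}. if S_plus_graph k i j then w i + w j else 0)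
          = (\<Sum>j\<in>{0..<n}. if j \<noteq> i then 1 + w j else 0)"
        using 1 by (intro sum.cong) (auto simp: S_plus_graph_def S_graph_def w_def doubleton_eq_iff)
      also have "\<dots> = (\<Sum>j\<in>{0..<n}. 1 + w j) - 2"
        using 1 i by (subst sum_except) (auto simp: w_def)
      also have "(\<Sum>j\<in>{0..<n}. 1 + w j) =
         (\<Sum>j\<in>{0..<k}. 1 + w j) + (\<Sum>j\<in>{k..<k+2}. 1 + w j) + (\<Sum>j\<in>{k+2..<n}. 1 + w j)"
      proof -
        have e1: "(\<Sum>j\<in>{0..<n}. 1 + w j) = (\<Sum>j\<in>{0..<k+2}. 1 + w j) + (\<Sum>j\<in>{k+2..<n}. 1 + w j)"
          by (rule sum.atLeastLessThan_concat[symmetric]) (use kn in auto)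
        have e2: "(\<Sum>j\<in>{0..<k+2}. 1 + w j) = (\<Sum>j\<in>{0..<k}. 1 + w j) + (\<Sum>j\<in>{k..<k+2}. 1 + w j)"
          by (rule sum.atLeastLessThan_concat[symmetric]) auto
        show ?thesis using e1 e2 by linarith
      qed
      also have "\<dots> = 2 * real k + 2 * (1 + b) + (real n - k - 2) * (1 + c)"
        using kn by (simp add: w_def of_nat_diff numeral_2_eq_2)
      finally show ?thesis using 1 hx by (simp add: w_def algebra_simps)
    next
      case 2
      have "(\<Sum>j\<in>{0..<n}. if S_plus_graph k i j then w i + w j else 0)
          = (\<Sum>j\<in>{0..<n}. (if j < k then b + 1 else 0) + (if j = k+1 then b + b else 0))"
        using 2 by (intro sum.cong) (auto simp: S_plus_graph_def S_graph_def w_def doubleton_eq_iff)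
      also have "\<dots> = real k * (b + 1) + 2 * b"
        using kn by (simp add: sum.distrib sum_below sum.delta)
      finally show ?thesis using 2 hb by (simp add: w_def algebra_simps)
    next
      case 3
      have "(\<Sum>j\<in>{0..<n}. if S_plus_graph k i j then w i + w j else 0)
          = (\<Sum>j\<in>{0..<n}. (if j < k then b + 1 else 0) + (if j = k then b + b else 0))"
        using 3 by (intro sum.cong) (auto simp: S_plus_graph_def S_graph_def w_def doubleton_eq_iff)
      also have "\<dots> = real k * (b + 1) + 2 * b"
        using kn by (simp add: sum.distrib sum_below sum.delta)
      finally show ?thesis using 3 hb by (simp add: w_def algebra_simps)
    next
      case 4
      have "(\<Sum>j\<in>{0..<n}. if S_plus_graph k i j then w i + w j else 0)
          = (\<Sum>j\<in>{0..<n}. if j < k then c + 1 else 0)"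
        using 4 by (intro sum.cong) (auto simp: S_plus_graph_def S_graph_def w_def doubleton_eq_iff)
      also have "\<dots> = real k * (c + 1)" using kn by (subst sum_below) auto
      finally show ?thesis using 4 hc by (simp add: w_def algebra_simps)
    qed
  qed
  also have "\<dots> = (x \<cdot>\<^sub>v ?u) $ i" using i by (simp add: w_def)
  finally show "(?Q *\<^sub>v ?u) $ i = (x \<cdot>\<^sub>v ?u) $ i" .
qed

theorem proposition1:
  fixes n k :: nat
  assumes "k \<ge> 2" and "n > 5 * k^2"
  shows "real n + 2 * real k - 2 - 2 * (real k ^ 2 - real k) / (real n + 2 * real k + 2)
           > q_index n (S_plus_graph k)
       \<and> q_index n (S_plus_graph k) > q_index n (S_graph k)
       \<and> q_index n (S_graph k)
           > real n + 2 * real k - 2 - 2 * (real k ^ 2 - real k) / (real n + 2 * real k - 3)"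
proof -
  define K where "K = real k"
  define N where "N = real n"
  have K2: "K \<ge> 2" using assms(1) by (simp add: K_def)
  have NK: "N > 5 * K^2" using assms(2) unfolding N_def K_def
    by (metis of_nat_less_iff of_nat_mult of_nat_numeral of_nat_power)
  have K4: "K^2 \<ge> 4" using K2 using power_mono[of 2 K 2] by simp
  have N20: "N > 20" using NK K4 by linarith
  have NKK: "N > K * K" using NK K2 by (simp add: power2_eq_square) (smt (verit) mult_nonneg_nonneg)
  define m where "m = N + 2*K - 2"
  define c0 where "c0 = 2 * (K^2 - K)"
  have c0pos: "c0 > 0" unfolding c0_def using K2 mult_pos_pos[of K "K - 1"] by (simp add: power2_eq_square algebra_simps)
  have c0m: "c0 < m - 1" unfolding c0_def m_def using NK K2 K4 by (simp add: algebra_simps)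
  define p where "p = (\<lambda>t::real. t^2 - m * t + c0)"
  define L where "L = m - c0 / (m - 1)"
  define U where "U = m - c0 / (m + 4)"
  define d where "d = c0 / (m - 1)"
  have d01: "0 < d" "d < 1" unfolding d_def using c0pos c0m by (auto simp: divide_less_eq)
  have dm: "c0 = d * (m - 1)" unfolding d_def using c0m c0pos by auto
  have pL: "p L < 0"
  proof -
    have "p L = d * (d - 1)" unfolding p_def L_def d_def[symmetric] using dm by (simp add: power2_eq_square algebra_simps)
    thus ?thesis using d01 by (simp add: mult_pos_neg)
  qed
  have pm: "p m > 0" unfolding p_def using c0pos by (simp add: power2_eq_square)
  have Lm: "L \<le> m" unfolding L_def d_def[symmetric] using d01 by simp
  have contp: "continuous_on {L..m} p" unfolding p_def by (intro continuous_intros)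
  obtain r where r: "L \<le> r" "r \<le> m" "p r = 0"
    using IVT'[of p L 0 m, OF _ _ Lm contp] pL pm by auto
  have rL: "r > L" using r pL by (cases "r = L") auto
  have LK: "L > K + 2" using d01 N20 K2 unfolding L_def d_def[symmetric] by (simp add: m_def)
  define b where "b = K / (r - K)"
  have rK: "r - K > 0" using rL LK by simp
  have hb: "K = (r - K) * b" unfolding b_def using rK by simp
  have hr: "r = N + K - 2 + (N - K) * b"
  proof -
    have "(r - N - K + 2) * (r - K) = K * (N - K)"
      using r(3) unfolding p_def m_def c0_def by (simp add: power2_eq_square algebra_simps)
    hence "r - N - K + 2 = K * (N - K) / (r - K)" using rK by (simp add: eq_divide_eq)
    thus ?thesis unfolding b_def by (simp add: algebra_simps)
  qed
  have bpos: "b > 0" unfolding b_def using rK K2 by simp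
  have kk: "k \<le> k^2" by (simp add: power2_eq_square le_square)
  have kn: "k < n" using kk assms(2) by linarith
  have qS: "q_index n (S_graph k) = r"
    unfolding q_index_def
    by (rule max_eig[OF Q_carrier Q_nn _ _ S_eig[OF kn hb[unfolded K_def] hr[unfolded N_def K_def]]])
       (use bpos kn in auto)
  define g where "g = (\<lambda>t. p t * (t - K - 2) - 4 * K)"
  have gr: "g r < 0" unfolding g_def using r(3) K2 by simp
  define e where "e = c0 / (m + 4)"
  have e01: "0 < e" "e < 1" unfolding e_def using c0pos c0m m_def N20 K2 by (auto simp: divide_less_eq)
  have em: "c0 = e * (m + 4)" unfolding e_def using m_def N20 K2 by auto
  have pU: "p U = e * e + 4 * e"
    unfolding p_def U_def e_def[symmetric] using em by (simp add: power2_eq_square algebra_simps)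
  have UK: "U - K - 2 > N + K - 5" using e01 unfolding U_def e_def[symmetric] by (simp add: m_def)
  have eK: "e * (m + 4) = 2 * K * (K - 1)" using em unfolding c0_def by (simp add: power2_eq_square algebra_simps)
  have key: "2 * (K - 1) * (U - K - 2) > m + 4"
  proof -
    have "2 * (K - 2) * (U - K - 2) \<ge> 0" using K2 UK N20 by (intro mult_nonneg_nonneg) auto
    hence "2 * (K - 1) * (U - K - 2) \<ge> 2 * (U - K - 2)" by (simp add: algebra_simps)
    moreover have "2 * (U - K - 2) > m + 4" using UK N20 unfolding m_def by (simp add: algebra_simps)
    ultimately show ?thesis by linarith
  qed
  have eU: "e * (U - K - 2) > K"
  proof -
    have "K * (2 * (K - 1) * (U - K - 2)) > K * (m + 4)"
      using key K2 by (intro mult_strict_left_mono) auto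
    also have "K * (2 * (K - 1) * (U - K - 2)) = (2 * K * (K - 1)) * (U - K - 2)" by (simp add: algebra_simps)
    also have "\<dots> = (e * (m+4)) * (U - K - 2)" by (simp only: eK)
    also have "\<dots> = (e * (U - K - 2)) * (m + 4)" by (simp add: algebra_simps)
    finally have "(e * (U - K - 2)) * (m + 4) > K * (m + 4)" .
    moreover have "m + 4 > 0" unfolding m_def using N20 K2 by linarith
    ultimately show ?thesis by simp
  qed
  have gU: "g U > 0"
  proof -
    have "g U = (e * e) * (U - K - 2) + 4 * (e * (U - K - 2)) - 4 * K"
      unfolding g_def pU by (simp add: algebra_simps)
    moreover have "(e * e) * (U - K - 2) > 0" using e01 UK N20 K2 by simp
    ultimately show ?thesis using eU by linarith
  qed
  have rU: "r < U"
  proof -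
    have "p U - p r = (U - r) * (U + r - m)" unfolding p_def by (simp add: power2_eq_square algebra_simps)
    moreover have "U + r - m > 0" unfolding U_def e_def[symmetric] using rL LK e01 K2 by linarith
    moreover have "p U - p r > 0" using pU r(3) e01 by (simp add: add_pos_pos)
    ultimately show ?thesis by (metis diff_gt_0_iff_gt zero_less_mult_pos2)
  qed
  have contg: "continuous_on {r..U} g" unfolding g_def p_def by (intro continuous_intros)
  obtain x where x: "r \<le> x" "x \<le> U" "g x = 0"
    using IVT'[of g r 0 U, OF _ _ _ contg] gr gU rU by auto
  have xr: "x > r" using x gr by (cases "x = r") auto
  have xU: "x < U" using x gU by (cases "x = U") auto
  define b' where "b' = K / (x - K - 2)"
  define c' where "c' = K / (x - K)"
  have xK: "x - K - 2 > 0" using xr rL LK by simp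
  have hb': "K = (x - K - 2) * b'" unfolding b'_def using xK by simp
  have hc': "K = (x - K) * c'" unfolding c'_def using xK by simp
  have hx: "x = N + K - 2 + 2 * b' + (N - K - 2) * c'"
  proof -
    have "(x - N - K + 2) * (x - K) * (x - K - 2) = 2 * K * (x - K) + (N - K - 2) * K * (x - K - 2)"
      using x(3) unfolding g_def p_def m_def c0_def by (simp add: power2_eq_square algebra_simps)
    hence "x - N - K + 2 = (2 * K * (x - K) + (N - K - 2) * K * (x - K - 2)) / ((x - K) * (x - K - 2))"
      using xK by (simp add: eq_divide_eq mult.assoc)
    also have "\<dots> = 2 * b' + (N - K - 2) * c'"
      unfolding b'_def c'_def using xK by (simp add: field_simps)
    finally show ?thesis by simp
  qed
  have bpos': "b' > 0" unfolding b'_def using xK K2 by simp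
  have cpos': "c' > 0" unfolding c'_def using xK K2 by simp
  have k2k: "2 * k \<le> k^2" using mult_le_mono1[OF assms(1), of k] by (simp add: power2_eq_square)
  have kn2: "k + 2 \<le> n" using k2k assms by linarith
  have qSp: "q_index n (S_plus_graph k) = x"
    unfolding q_index_def
    by (rule max_eig[OF Q_carrier Q_nn _ _ Sp_eig[OF kn2 hb'[unfolded K_def] hc'[unfolded K_def] hx[unfolded N_def K_def]]])
       (use bpos' cpos' kn in auto)
  have "U = real n + 2 * real k - 2 - 2 * (real k ^ 2 - real k) / (real n + 2 * real k + 2)"
    unfolding U_def m_def c0_def N_def K_def by (simp add: algebra_simps)
  moreover have "L = real n + 2 * real k - 2 - 2 * (real k ^ 2 - real k) / (real n + 2 * real k - 3)"
    unfolding L_def m_def c0_def N_def K_def by (simp add: algebra_simps)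
  ultimately show ?thesis using qS qSp xU xr rL by simp
qed

end
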